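(* Let $\lambda\in\mathbb R\cup i\mathbb R$ be a constant, $\vec H\in\Gamma(E)$, and let $\varphi\in\Gamma(\Sigma)$ solve $D\varphi=\vec H\cdot\varphi-2\lambda\varphi$. Fix $p\in M$, an orthonormal basis $(e_1,e_2)$ of $T_pM$, and a unit vector $e_3\in E_p$ with $\vec H(p)=|\vec H(p)|e_3$. With $F_{++},F_{--},F_{+-},F_{-+}$ defined by $F_{++}(X,Y)=\Re e\langle\nabla_X\varphi^{++},Y\cdot e_3\cdot\varphi^{--}\rangle$, $F_{--}(X,Y)=\Re e\langle\nabla_X\varphi^{--},Y\cdot e_3\cdot\varphi^{++}\rangle$, $F_{+-}(X,Y)=\Re e\langle\nabla_X\varphi^{+-},Y\cdot e_3\cdot\varphi^{-+}\rangle$, $F_{-+}(X,Y)=\Re e\langle\nabla_X\varphi^{-+},Y\cdot e_3\cdot\varphi^{+-}\rangle$, one has at $p$: $F_{++}(e_1,e_2)=F_{++}(e_2,e_1)-2\Re e\langle\lambda\varphi^{-+},e_1\cdot e_2\cdot e_3\cdot\varphi^{--}\rangle$, $F_{--}(e_1,e_2)=F_{--}(e_2,e_1)-2\Re e\langle\lambda\varphi^{+-},e_1\cdot e_2\cdot e_3\cdot\varphi^{++}\rangle$, $F_{+-}(e_1,e_2)=F_{+-}(e_2,e_1)-2\Re e\langle\lambda\varphi^{--},e_1\cdot e_2\cdot e_3\cdot\varphi^{-+}\rangle$, $F_{-+}(e_1,e_2)=F_{-+}(e_2,e_1)-2\Re e\langle\lambda\varphi^{++},e_1\cdot e_2\cdot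 e_3\cdot\varphi^{+-}\rangle$.
   Context: Setup. $(M^2,g)$ is an oriented Riemannian surface with a fixed spin structure, and $E\to M$ is an oriented real vector bundle of rank $2$ with a metric $\langle\cdot,\cdot\rangle$, a compatible connection $\nabla^E$ and a fixed spin structure. $\Sigma M=\Sigma^+M\oplus\Sigma^-M$ and $\Sigma E=\Sigma^+E\oplus\Sigma^-E$ denote the complex spinor bundles of $M$ and $E$ with their half-spinor splittings, spinorial connections $\nabla^{\Sigma M},\nabla^{\Sigma E}$ and Clifford multiplications $\cdot_M,\cdot_E$. The twisted spinor bundle is $\Sigma=\Sigma M\otimes\Sigma E$, with connection $\nabla=\nabla^{\Sigma M}\otimes\mathrm{Id}+\mathrm{Id}\otimes\nabla^{\Sigma E}$ and Clifford multiplication by vectors of $TM\oplus E$ given on $\varphi=\alpha\otimes\sigma$ by $X\cdot\varphi=(X\cdot_M\alpha)\otimes\overline{\sigma}$ if $X\in TM$ and $X\cdot\varphi=\alpha\otimes(X\cdot_E\sigma)$ if $X\in E$, where $\overline\sigma=\sigma^+-\sigma^-$; this extends to an action of the Clifford bundle $Cl(TM\oplus E)$. $\Sigma$ carries its natural Hermitian product $\langle\cdot,\cdot\rangle$ ($\mathbb C$-linear in the first slot, antilinear in the second), compatible with $\nabla$, for which Clifford multiplication by vectors is skew-Hermitian; $\Re e\langle\cdot,\cdot\rangle$ is the associated real scalar product and $|\cdot|$ the norm. The Dirac operator is $D\varphi=e_1\cdot\nabla_{e_1}\varphi+e_2\cdot\nabla_{e_2}\varphi$, $(e_1,e_2)$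 a local orthonormal frame of $TM$. Write $\Sigma^{\epsilon\delta}=\Sigma^\epsilon M\otimes\Sigma^\delta E$ ($\epsilon,\delta\in\{+,-\}$), decompose $\varphi=\varphi^{++}+\varphi^{--}+\varphi^{+-}+\varphi^{-+}$ accordingly, and set $\varphi^+=\varphi^{++}+\varphi^{--}$, $\varphi^-=\varphi^{+-}+\varphi^{-+}$. For $\lambda\in\mathbb C$, $\lambda X\cdot\varphi$ means complex scalar multiplication of $X\cdot\varphi$. *)

theory Defs
  imports Complex_Main
begin

text \<open>Pointwise model of the fibre at p of the twisted spinor bundle
  Sigma = Sigma M (x) Sigma E of a surface M with a rank-2 bundle E.
  Sigma_p M = C^2 with basis (alpha_plus, alpha_minus) spanning Sigma^+ M and Sigma^- M,
  Sigma_p E = C^2 with basis (sigma_plus, sigma_minus) spanning Sigma^+ E and Sigma^- E,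
  both chosen orthonormal and adapted to the orthonormal frames (e1,e2) of T_pM and
  (e3,e4) of E_p.  A twisted spinor is given by its four coordinates
  phi eps del = coefficient of alpha_eps (x) sigma_del (True = +, False = -),
  so the component phi^{eps del} lies in Sigma^{eps del}.\<close>

type_synonym spinor = "bool \<Rightarrow> bool \<Rightarrow> complex"

text \<open>Clifford action of e1 and e2 on Sigma_p M = C^2 (indexed by bool).
  They are skew-Hermitian, square to -1, anticommute and exchange Sigma^+ M, Sigma^- M.
  The flag ori records the orientation of the frame (e1,e2): for the other orientation
  e2 acts by the opposite matrix.\<close>
definition clM1 :: "(bool \<Rightarrow> complex) \<Rightarrow> (bool \<Rightarrow> complex)" where
  "clM1 a = (\<lambda>e. if e then - a False else a True)"

definition clM2 :: "bool \<Rightarrow> (bool \<Rightarrow> complex) \<Rightarrow> (bool \<Rightarrow> complex)" where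
  "clM2 ori a = (\<lambda>e. (if ori then 1 else -1) * (if e then \<i> * a False else \<i> * a True))"

definition clE3 :: "(bool \<Rightarrow> complex) \<Rightarrow> (bool \<Rightarrow> complex)" where
  "clE3 s = (\<lambda>d. if d then - s False else s True)"

text \<open>Twisted Clifford multiplication: X . (alpha (x) sigma) = (X . alpha) (x) sigma-bar for X in TM,
  alpha (x) (X . sigma) for X in E, where sigma-bar = sigma^+ - sigma^-.\<close>
definition cl1 :: "spinor \<Rightarrow> spinor" where
  "cl1 phi = (\<lambda>e d. clM1 (\<lambda>e'. phi e' d) e * (if d then 1 else -1))"

definition cl2 :: "bool \<Rightarrow> spinor \<Rightarrow> spinor" where
  "cl2 ori phi = (\<lambda>e d. clM2 ori (\<lambda>e'. phi e' d) e * (if d then 1 else -1))"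

definition cl3 :: "spinor \<Rightarrow> spinor" where
  "cl3 phi = (\<lambda>e d. clE3 (\<lambda>d'. phi e d') d)"

definition smult_sp :: "complex \<Rightarrow> spinor \<Rightarrow> spinor" where
  "smult_sp c phi = (\<lambda>e d. c * phi e d)"

definition herm :: "spinor \<Rightarrow> spinor \<Rightarrow> complex" where
  "herm u v = (\<Sum>e\<in>UNIV. \<Sum>d\<in>UNIV. u e d * cnj (v e d))"

definition add_sp :: "spinor \<Rightarrow> spinor \<Rightarrow> spinor" where
  "add_sp u v = (\<lambda>e d. u e d + v e d)"

definition diff_sp :: "spinor \<Rightarrow> spinor \<Rightarrow> spinor" where
  "diff_sp u v = (\<lambda>e d. u e d - v e d)"

definition proj :: "bool \<Rightarrow> bool \<Rightarrow> spinor \<Rightarrow> spinor" where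
  "proj eps del phi = (\<lambda>e d. if e = eps \<and> d = del then phi e d else 0)"

end

theory Submission
  imports Defs
begin

text \<open>phi = phi(p); psi1 = nabla_{e1} phi (p); psi2 = nabla_{e2} phi (p);
  H(p) = h e3 with h = |H(p)|.  Since nabla preserves the splitting,
  nabla_X phi^{eps del} = proj eps del (nabla_X phi).\<close>
theorem mainTheorem6:
  fixes ori :: bool and h :: real and lam :: complex and phi psi1 psi2 :: spinor
  assumes lam: "Im lam = 0 \<or> Re lam = 0"
    and h: "h \<ge> 0"
    and dirac: "add_sp (cl1 psi1) (cl2 ori psi2)
                = diff_sp (smult_sp (complex_of_real h) (cl3 phi)) (smult_sp (2 * lam) phi)"
  shows "(Re (herm (proj True True psi1) (cl2 ori (cl3 (proj False False phi)))) = Re (herm (proj True True psi2) (cl1 (cl3 (proj False False phi)))) - 2 * Re (herm (smult_sp lam (proj False True phi)) (cl1 (cl2 ori (cl3 (proj False False phi))))))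
    \<and> (Re (herm (proj False False psi1) (cl2 ori (cl3 (proj True True phi)))) = Re (herm (proj False False psi2) (cl1 (cl3 (proj True True phi)))) - 2 * Re (herm (smult_sp lam (proj True False phi)) (cl1 (cl2 ori (cl3 (proj True True phi))))))
    \<and> (Re (herm (proj True False psi1) (cl2 ori (cl3 (proj False True phi)))) = Re (herm (proj True False psi2) (cl1 (cl3 (proj False True phi)))) - 2 * Re (herm (smult_sp lam (proj False False phi)) (cl1 (cl2 ori (cl3 (proj False True phi))))))
    \<and> (Re (herm (proj False True psi1) (cl2 ori (cl3 (proj True False phi)))) = Re (herm (proj False True psi2) (cl1 (cl3 (proj True False phi)))) - 2 * Re (herm (smult_sp lam (proj True True phi)) (cl1 (cl2 ori (cl3 (proj True False phi))))))"
proof -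
  have D: "\<And>e d. add_sp (cl1 psi1) (cl2 ori psi2) e d = diff_sp (smult_sp (complex_of_real h) (cl3 phi)) (smult_sp (2 * lam) phi) e d"
    using dirac by simp
  have P: "psi1 e d = (if e then 1 else -1) * (if d then 1 else -1) *
     (complex_of_real h * cl3 phi (\<not> e) d - 2 * lam * phi (\<not> e) d - cl2 ori psi2 (\<not> e) d)" for e d
    using D[of "\<not> e" d] unfolding add_sp_def diff_sp_def smult_sp_def cl1_def clM1_def
    by (cases e; cases d; auto simp: algebra_simps)
  have UB: "(UNIV::bool set) = {True, False}" by auto
  have C0: "Re (herm (proj True True psi1) (cl2 ori (cl3 (proj False False phi)))) = Re (herm (proj True True psi2) (cl1 (cl3 (proj False False phi)))) - 2 * Re (herm (smult_sp lam (proj False True phi)) (cl1 (cl2 ori (cl3 (proj False False phi)))))"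
    using lam unfolding herm_def UB proj_def smult_sp_def cl1_def
    apply (simp add: P)
    unfolding cl2_def cl3_def clM1_def clM2_def clE3_def
    by (cases ori; auto simp: algebra_simps complex_eq_iff)
  have C1: "Re (herm (proj False False psi1) (cl2 ori (cl3 (proj True True phi)))) = Re (herm (proj False False psi2) (cl1 (cl3 (proj True True phi)))) - 2 * Re (herm (smult_sp lam (proj True False phi)) (cl1 (cl2 ori (cl3 (proj True True phi)))))"
    using lam unfolding herm_def UB proj_def smult_sp_def cl1_def
    apply (simp add: P)
    unfolding cl2_def cl3_def clM1_def clM2_def clE3_def
    by (cases ori; auto simp: algebra_simps complex_eq_iff)
  have C2: "Re (herm (proj True False psi1) (cl2 ori (cl3 (proj False True phi)))) = Re (herm (proj True False psi2) (cl1 (cl3 (proj False True phi)))) - 2 * Re (herm (smult_sp lam (proj False False phi)) (cl1 (cl2 ori (cl3 (proj False True phi)))))"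
    using lam unfolding herm_def UB proj_def smult_sp_def cl1_def
    apply (simp add: P)
    unfolding cl2_def cl3_def clM1_def clM2_def clE3_def
    by (cases ori; auto simp: algebra_simps complex_eq_iff)
  have C3: "Re (herm (proj False True psi1) (cl2 ori (cl3 (proj True False phi)))) = Re (herm (proj False True psi2) (cl1 (cl3 (proj True False phi)))) - 2 * Re (herm (smult_sp lam (proj True True phi)) (cl1 (cl2 ori (cl3 (proj True False phi)))))"
    using lam unfolding herm_def UB proj_def smult_sp_def cl1_def
    apply (simp add: P)
    unfolding cl2_def cl3_def clM1_def clM2_def clE3_def
    by (cases ori; auto simp: algebra_simps complex_eq_iff)
  show ?thesis using C0 C1 C2 C3 by blast
qed

end
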